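(* Let $G=(V,E)$ be a cactus. If $X,Y\subseteq V$ are such that $\mathbf v(X)$ and $\mathbf v(Y)$ are distinct and adjacent vertices of $\mathrm{CUT}(G)$ (i.e. joined by an edge of the 1-skeleton of $\mathrm{CUT}(G)$), then $|\delta(X\triangle Y)|\le 2$.
   Context: For an undirected graph $G=(V,E)$ and $S\subseteq V$, $\delta(S)\subseteq E$ denotes the set of edges with exactly one endpoint in $S$, and $\mathbf v(S)\in\{0,1\}^{E}$ is its incidence vector ($v(S)_e=1$ iff $e\in\delta(S)$). The cut polytope is $\mathrm{CUT}(G)=\operatorname{conv}\{\mathbf v(S):S\subseteq V\}\subset\mathbb R^{E}$. The 1-skeleton of a polytope is the graph whose vertices are the polytope's vertices and whose edges are its one-dimensional faces. $X\triangle Y$ denotes symmetric difference. A cactus is a connected graph in which every edge belongs to at most one simple cycle. *)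

theory Defs
  imports "HOL-Analysis.Analysis"
begin

definition simple_graph :: "'v set \<Rightarrow> 'v set set \<Rightarrow> bool" where
  "simple_graph V E \<longleftrightarrow> finite V \<and> E \<subseteq> {{u, w} | u w. u \<in> V \<and> w \<in> V \<and> u \<noteq> w}"

definition graph_connected :: "'v set \<Rightarrow> 'v set set \<Rightarrow> bool" where
  "graph_connected V E \<longleftrightarrow>
     (\<forall>u\<in>V. \<forall>w\<in>V. (u, w) \<in> {(a, b). {a, b} \<in> E}\<^sup>*)"

definition simple_cycle :: "'v set set \<Rightarrow> 'v set set \<Rightarrow> bool" where
  "simple_cycle E C \<longleftrightarrow>
     (\<exists>vs. length vs \<ge> 3 \<and> distinct vs \<and>
        (\<forall>i < length vs. {vs ! i, vs ! ((i + 1) mod length vs)} \<in> E) \<and>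
        C = {{vs ! i, vs ! ((i + 1) mod length vs)} | i. i < length vs})"

definition cactus :: "'v set \<Rightarrow> 'v set set \<Rightarrow> bool" where
  "cactus V E \<longleftrightarrow> simple_graph V E \<and> graph_connected V E \<and>
     (\<forall>e\<in>E. \<forall>C1 C2. simple_cycle E C1 \<and> simple_cycle E C2 \<and> e \<in> C1 \<and> e \<in> C2 \<longrightarrow> C1 = C2)"

definition delta :: "'v set set \<Rightarrow> 'v set \<Rightarrow> 'v set set" where
  "delta E S = {e \<in> E. card (e \<inter> S) = 1}"

text \<open>Incidence vector of delta(S). R^E is embedded as the coordinate subspace of
  real^('v set) spanned by the coordinates e in E (other coordinates are 0).\<close>
definition cut_vec :: "'v::finite set set \<Rightarrow> 'v set \<Rightarrow> real ^ ('v set)" where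
  "cut_vec E S = (\<chi> e. if e \<in> delta E S then 1 else 0)"

definition CUT :: "'v::finite set \<Rightarrow> 'v set set \<Rightarrow> (real ^ ('v set)) set" where
  "CUT V E = convex hull (cut_vec E ` Pow V)"

definition skeleton_adjacent :: "(real ^ 'n) set \<Rightarrow> real ^ 'n \<Rightarrow> real ^ 'n \<Rightarrow> bool" where
  "skeleton_adjacent P p q \<longleftrightarrow>
     p extreme_point_of P \<and> q extreme_point_of P \<and>
     (\<exists>F. F face_of P \<and> aff_dim F = 1 \<and> p \<in> F \<and> q \<in> F)"

end

theory Submission
  imports Defs "HOL-Library.Transitive_Closure_Table"
begin


lemma sg_edge:
  assumes "simple_graph V E" "e \<in> E"
  obtains u w where "e = {u,w}" "u \<noteq> w" "u \<in> V" "w \<in> V"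
  using assms unfolding simple_graph_def by blast

lemma delta_pair:
  assumes "u \<noteq> w"
  shows "{u,w} \<in> delta E S \<longleftrightarrow> {u,w} \<in> E \<and> ((u \<in> S) \<noteq> (w \<in> S))"
proof -
  have "card ({u,w} \<inter> S) = (if u \<in> S then 1 else 0) + (if w \<in> S then 1 else 0)"
    using assms by (cases "u \<in> S"; cases "w \<in> S") (auto simp: Int_insert_left)
  then show ?thesis unfolding delta_def by auto
qed

lemma delta_edge:
  assumes "simple_graph V E" "e \<in> E"
  shows "e \<in> delta E S \<longleftrightarrow> (\<exists>u w. e = {u,w} \<and> u \<noteq> w \<and> ((u \<in> S) \<noteq> (w \<in> S)))"
proof -
  obtain u w where e: "e = {u,w}" "u \<noteq> w" using sg_edge[OF assms] by metis
  show ?thesis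
  proof
    assume "e \<in> delta E S" then show "\<exists>u w. e = {u,w} \<and> u \<noteq> w \<and> ((u \<in> S) \<noteq> (w \<in> S))"
      using e delta_pair[of u w E S] assms by auto
  next
    assume "\<exists>u w. e = {u,w} \<and> u \<noteq> w \<and> ((u \<in> S) \<noteq> (w \<in> S))"
    then obtain a b where "e = {a,b}" "a \<noteq> b" "(a \<in> S) \<noteq> (b \<in> S)" by blast
    then show "e \<in> delta E S" using delta_pair[of a b E S] assms by auto
  qed
qed

lemma delta_sub: "delta E S \<subseteq> E" unfolding delta_def by auto

lemma delta_symdiff:
  assumes "simple_graph V E" "e \<in> E"
  shows "e \<in> delta E ((S - T) \<union> (T - S)) \<longleftrightarrow> (e \<in> delta E S) \<noteq> (e \<in> delta E T)"
proof -
  obtain u w where e: "e = {u,w}" "u \<noteq> w" using sg_edge[OF assms] by metis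
  show ?thesis using e assms delta_pair[of u w E] by auto
qed

lemma delta_inter_V:
  assumes "simple_graph V E"
  shows "delta E (S \<inter> V) = delta E S"
proof -
  have "e \<in> delta E (S \<inter> V) \<longleftrightarrow> e \<in> delta E S" for e
  proof (cases "e \<in> E")
    case True
    then obtain u w where e: "e = {u,w}" "u \<noteq> w" "u \<in> V" "w \<in> V" using sg_edge[OF assms] by metis
    show ?thesis using e True delta_pair[of u w E] by auto
  qed (auto simp: delta_def)
  then show ?thesis by auto
qed

lemma cut_vec_nth: "cut_vec E S $ e = (if e \<in> delta E S then 1 else 0)"
  unfolding cut_vec_def by simp

lemma not_adj:
  assumes sg: "simple_graph V E" and XV: "X \<subseteq> V" and YV: "Y \<subseteq> V"
    and adj: "skeleton_adjacent (CUT V E) (cut_vec E X) (cut_vec E Y)"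
    and W1: "delta E W \<subseteq> delta E ((X - Y) \<union> (Y - X))"
    and W2: "delta E W \<noteq> {}" and W3: "delta E W \<noteq> delta E ((X - Y) \<union> (Y - X))"
  shows False
proof -
  define W' where "W' = W \<inter> V"
  have dW: "delta E W' = delta E W" unfolding W'_def using delta_inter_V[OF sg] .
  define A where "A = (X - W') \<union> (W' - X)"
  define B where "B = (Y - W') \<union> (W' - Y)"
  define p where "p = cut_vec E X"
  define q where "q = cut_vec E Y"
  define a where "a = cut_vec E A"
  define b where "b = cut_vec E B"
  have AV: "A \<subseteq> V" "B \<subseteq> V" using XV YV unfolding A_def B_def W'_def by auto
  have aC: "a \<in> CUT V E" "b \<in> CUT V E" unfolding CUT_def a_def b_def using AV
    by (auto intro!: hull_inc)
  obtain F where F: "F face_of CUT V E" "aff_dim F = 1" "p \<in> F" "q \<in> F"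
    using adj unfolding skeleton_adjacent_def p_def q_def by blast
  obtain e where e: "e \<in> delta E W" using W2 by blast
  have eE: "e \<in> E" using e delta_sub by blast
  obtain f where f: "f \<in> delta E ((X - Y) \<union> (Y - X))" "f \<notin> delta E W" using W1 W3 by blast
  have fE: "f \<in> E" using f delta_sub by blast
  have coord: "g \<in> E \<Longrightarrow> (g \<in> delta E A) = ((g \<in> delta E X) \<noteq> (g \<in> delta E W))
     \<and> (g \<in> delta E B) = ((g \<in> delta E Y) \<noteq> (g \<in> delta E W))
     \<and> (g \<in> delta E ((X - Y) \<union> (Y - X))) = ((g \<in> delta E X) \<noteq> (g \<in> delta E Y))" for g
    unfolding A_def B_def using delta_symdiff[OF sg] dW by metis
  have mid: "midpoint p q = midpoint a b"
  proof -
    have "p $ g + q $ g = a $ g + b $ g" for g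
    proof (cases "g \<in> E")
      case True
      have "g \<in> delta E W \<Longrightarrow> g \<in> delta E ((X - Y) \<union> (Y - X))" using W1 by blast
      then show ?thesis using coord[OF True] unfolding p_def q_def a_def b_def cut_vec_nth
        by auto
    next
      case False
      then show ?thesis unfolding p_def q_def a_def b_def cut_vec_nth using delta_sub by auto
    qed
    then show ?thesis unfolding midpoint_def by (simp add: vec_eq_iff)
  qed
  have pq: "p \<noteq> q" using f coord[OF fE] unfolding p_def q_def
    by (metis cut_vec_nth zero_neq_one)
  have ab: "a \<noteq> b" using e W1 coord[OF eE] unfolding a_def b_def
    by (metis cut_vec_nth subsetD zero_neq_one)
  have "midpoint p q \<in> F"
    using face_of_imp_convex[OF F(1)] F(3,4) midpoint_in_closed_segment convex_contains_segment
    by blast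
  then have "a \<in> F" using face_ofD[OF F(1), of "midpoint a b" a b] mid ab aC by simp
  moreover have "F \<subseteq> affine hull {p,q}"
  proof -
    have "affine hull {p,q} = affine hull F"
    proof (rule affine_dim_equal)
      show "affine hull {p, q} \<subseteq> affine hull F" using F(3,4) by (intro hull_mono) auto
    qed (use F pq in auto)
    then show ?thesis by (metis hull_subset)
  qed
  ultimately obtain u v where uv: "a = u *\<^sub>R p + v *\<^sub>R q" "u + v = 1"
    unfolding affine_hull_2 by blast
  have ae: "a $ e = u * p $ e + v * q $ e" using uv by simp
  have "a = q"
  proof -
    have "e \<in> delta E ((X - Y) \<union> (Y - X))" using e W1 by blast
    then have "u = 0" using ae uv(2) coord[OF eE] e unfolding a_def p_def q_def cut_vec_nth
      by (auto split: if_splits)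
    then show ?thesis using uv by simp
  qed
  then show False using f coord[OF fE] unfolding a_def q_def
    by (metis cut_vec_nth zero_neq_one)
qed



definition inR :: "'v set set \<Rightarrow> 'v set \<Rightarrow> 'v \<Rightarrow> 'v \<Rightarrow> bool" where
  "inR E S x y \<longleftrightarrow> {x,y} \<in> E \<and> x \<in> S \<and> y \<in> S"

lemma sg_card2: "simple_graph V E \<Longrightarrow> e \<in> E \<Longrightarrow> card e = 2"
proof -
  assume "simple_graph V E" "e \<in> E"
  then obtain u w where "e = {u,w}" "u \<noteq> w" using sg_edge by metis
  then show ?thesis by simp
qed

lemma sg_ne: "simple_graph V E \<Longrightarrow> {x,y} \<in> E \<Longrightarrow> x \<noteq> y"
  using sg_card2[of V E "{x,y}"] by (cases "x = y") auto

lemma not_delta_sub: "simple_graph V E \<Longrightarrow> e \<in> E \<Longrightarrow> e \<subseteq> S \<Longrightarrow> e \<notin> delta E S"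
  unfolding delta_def by (simp add: Int_absorb2 sg_card2)

lemma not_delta_disj: "e \<inter> S = {} \<Longrightarrow> e \<notin> delta E S"
  unfolding delta_def by simp

lemma delta_compl: "simple_graph V E \<Longrightarrow> delta E (- S) = delta E S"
proof -
  assume sg: "simple_graph V E"
  have "e \<in> delta E (- S) \<longleftrightarrow> e \<in> delta E S" for e
  proof (cases "e \<in> E")
    case True
    then obtain u w where "e = {u,w}" "u \<noteq> w" using sg_edge[OF sg] by metis
    then show ?thesis using delta_pair[of u w E S] delta_pair[of u w E "-S"] by auto
  qed (auto simp: delta_def)
  then show ?thesis by auto
qed
lemma conn_empty:
  assumes sg: "simple_graph V E" and conn: "graph_connected V E"
    and s: "s \<in> T" "s \<in> V" and d: "delta E T = {}"
  shows "V \<subseteq> T"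
proof
  fix v assume v: "v \<in> V"
  have "(s, v) \<in> {(a, b). {a, b} \<in> E}\<^sup>*" using conn s v unfolding graph_connected_def by blast
  then show "v \<in> T"
  proof (induction rule: rtrancl_induct)
    case base then show ?case using s by simp
  next
    case (step y z)
    then have yz: "{y,z} \<in> E" by simp
    have "y \<noteq> z" using sg_ne[OF sg yz] .
    then show ?case using delta_pair[of y z E T] d yz step.IH by auto
  qed
qed

lemma delta_nonempty_not_all:
  assumes sg: "simple_graph V E" and ne: "delta E S \<noteq> {}" shows "\<not> V \<subseteq> S"
proof
  assume "V \<subseteq> S"
  obtain e where e: "e \<in> delta E S" using assms by blast
  then have "e \<in> E" using delta_sub by blast
  then obtain u w where "e = {u,w}" "u \<in> V" "w \<in> V" using sg_edge[OF sg] by metis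
  then have "e \<subseteq> S" using \<open>V \<subseteq> S\<close> by auto
  then show False using not_delta_sub[OF sg \<open>e \<in> E\<close>] e by blast
qed

lemma minimal_conn:
  assumes sg: "simple_graph V E" and conn: "graph_connected V E"
    and min: "\<forall>W. delta E W \<subseteq> delta E S \<longrightarrow> delta E W = {} \<or> delta E W = delta E S"
    and ne: "delta E S \<noteq> {}" and a: "a \<in> S" "a \<in> V" and x: "x \<in> S" "x \<in> V"
  shows "(inR E S)\<^sup>*\<^sup>* a x"
proof (rule ccontr)
  assume nx: "\<not> (inR E S)\<^sup>*\<^sup>* a x"
  define K where "K = {y. (inR E S)\<^sup>*\<^sup>* a y}"
  define D where "D = S - K"
  have aK: "a \<in> K" unfolding K_def by simp
  have KS: "K \<subseteq> S"
  proof
    fix y assume "y \<in> K"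
    then have "(inR E S)\<^sup>*\<^sup>* a y" unfolding K_def by simp
    then show "y \<in> S" by (induction rule: rtranclp_induct) (auto simp: a inR_def)
  qed
  have out: "z \<notin> S" if "{y,z} \<in> E" "y \<in> K" "z \<notin> K" for y z
  proof
    assume "z \<in> S"
    then have "inR E S y z" using that KS unfolding inR_def by auto
    then have "z \<in> K" using that(2) unfolding K_def by (simp add: rtranclp.rtrancl_into_rtrancl)
    then show False using that by simp
  qed
  have out2: "z \<notin> S" if "{y,z} \<in> E" "y \<in> D" "z \<notin> D" for y z
  proof
    assume zS: "z \<in> S"
    then have zK: "z \<in> K" using that unfolding D_def by simp
    have "inR E S z y" using that zS unfolding inR_def D_def by (auto simp: insert_commute)
    then have "y \<in> K" using zK unfolding K_def by (simp add: rtranclp.rtrancl_into_rtrancl)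
    then show False using that unfolding D_def by simp
  qed
  have dK: "delta E K \<subseteq> delta E S"
  proof
    fix e assume e: "e \<in> delta E K"
    then have eE: "e \<in> E" using delta_sub by blast
    obtain u w where uw: "e = {u,w}" "u \<noteq> w" "(u \<in> K) \<noteq> (w \<in> K)"
      using e delta_edge[OF sg eE] by blast
    show "e \<in> delta E S"
    proof (cases "u \<in> K")
      case True
      then show ?thesis using uw out[of u w] eE KS delta_pair[of u w E S] by auto
    next
      case False
      then show ?thesis using uw out[of w u] eE KS delta_pair[of u w E S] by (auto simp: insert_commute)
    qed
  qed
  have dD: "delta E D \<subseteq> delta E S"
  proof
    fix e assume e: "e \<in> delta E D"
    then have eE: "e \<in> E" using delta_sub by blast
    obtain u w where uw: "e = {u,w}" "u \<noteq> w" "(u \<in> D) \<noteq> (w \<in> D)"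
      using e delta_edge[OF sg eE] by blast
    show "e \<in> delta E S"
    proof (cases "u \<in> D")
      case True
      then show ?thesis using uw out2[of u w] eE delta_pair[of u w E S] unfolding D_def by auto
    next
      case False
      then show ?thesis using uw out2[of w u] eE delta_pair[of u w E S] unfolding D_def
        by (auto simp: insert_commute)
    qed
  qed
  have disj: "delta E K \<inter> delta E D = {}"
  proof (rule ccontr)
    assume "delta E K \<inter> delta E D \<noteq> {}"
    then obtain e where e: "e \<in> delta E K" "e \<in> delta E D" by blast
    then have eE: "e \<in> E" using delta_sub by blast
    obtain u w where uw: "e = {u,w}" "u \<noteq> w" using sg_edge[OF sg eE] by metis
    have "(u \<in> K) \<noteq> (w \<in> K)" "(u \<in> D) \<noteq> (w \<in> D)"
      using e uw delta_pair[of u w E] by auto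
    then show False using out[of u w] out[of w u] uw eE KS unfolding D_def
      by (auto simp: insert_commute)
  qed
  have "delta E K \<noteq> {}"
    using conn_empty[OF sg conn aK a(2)] delta_nonempty_not_all[OF sg ne] KS by blast
  then have dKS: "delta E K = delta E S" using min dK by blast
  have "delta E D = {}" using min dD disj dKS by blast
  moreover have "x \<in> D" using nx x unfolding D_def K_def by simp
  ultimately have "V \<subseteq> D" using conn_empty[OF sg conn _ x(2)] by blast
  then show False using a aK unfolding D_def by blast
qed



lemma path_in: "rtrancl_path (inR E S) a xs b \<Longrightarrow> a \<in> S \<Longrightarrow> set xs \<subseteq> S \<and> b \<in> S"
  by (induction rule: rtrancl_path.induct) (auto simp: inR_def)

lemma path_last: "rtrancl_path r a xs b \<Longrightarrow> last (a # xs) = b"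
  by (induction rule: rtrancl_path.induct) (auto elim: rtrancl_path.cases)

lemma cycle_build:
  assumes e1: "{a1,b1} \<in> E" and e2: "{a2,b2} \<in> E" and ne: "{a1,b1} \<noteq> {a2,b2}"
    and S: "a1 \<in> S" "a2 \<in> S" "b1 \<notin> S" "b2 \<notin> S"
    and P1: "rtrancl_path (inR E S) a1 xs a2" "distinct (a1 # xs)"
    and P2: "rtrancl_path (inR E (- S)) b2 ys b1" "distinct (b2 # ys)"
  shows "\<exists>C. simple_cycle E C \<and> {a1,b1} \<in> C \<and> {a2,b2} \<in> C \<and>
           (\<forall>e\<in>C. e \<subseteq> S \<or> e \<inter> S = {} \<or> e = {a1,b1} \<or> e = {a2,b2})"
proof -
  define vs where "vs = (a1 # xs) @ (b2 # ys)"
  define m where "m = length xs"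
  define n where "n = length vs"
  have n: "n = m + length ys + 2" unfolding n_def m_def vs_def by simp
  have L1: "set (a1 # xs) \<subseteq> S" using path_in[OF P1(1) S(1)] S by auto
  have L2: "set (b2 # ys) \<subseteq> - S" using path_in[OF P2(1)] S by auto
  have last1: "last (a1 # xs) = a2" using path_last[OF P1(1)] .
  have last2: "last (b2 # ys) = b1" using path_last[OF P2(1)] .
  have len: "n \<ge> 3"
  proof (cases "xs = []")
    case True
    then have "a1 = a2" using last1 by simp
    then have "b1 \<noteq> b2" using ne by auto
    then have "ys \<noteq> []" using last2 by auto
    then show ?thesis using n by (cases ys) auto
  next
    case False
    then show ?thesis using n unfolding m_def by (cases xs) auto
  qed
  have dist: "distinct vs" unfolding vs_def using P1(2) P2(2) L1 L2 by auto
  have vs_lo: "vs ! i = (a1 # xs) ! i" if "i \<le> m" for i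
  proof -
    have "vs ! i = (if i < length (a1#xs) then (a1#xs)!i else (b2#ys)!(i - length (a1#xs)))"
      unfolding vs_def by (rule nth_append)
    then show ?thesis using that unfolding m_def by (simp only: length_Cons if_True if_False) simp
  qed
  have vs_hi: "vs ! i = (b2 # ys) ! (i - (m + 1))" if "i > m" for i
  proof -
    have "vs ! i = (if i < length (a1#xs) then (a1#xs)!i else (b2#ys)!(i - length (a1#xs)))"
      unfolding vs_def by (rule nth_append)
    then show ?thesis using that unfolding m_def by (simp only: length_Cons if_True if_False) simp
  qed
  have key: "{vs ! i, vs ! ((i + 1) mod n)} \<in> E \<and>
      ({vs ! i, vs ! ((i + 1) mod n)} \<subseteq> S \<or> {vs ! i, vs ! ((i + 1) mod n)} \<inter> S = {}
       \<or> {vs ! i, vs ! ((i + 1) mod n)} = {a1,b1} \<or> {vs ! i, vs ! ((i + 1) mod n)} = {a2,b2})"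
    if i: "i < n" for i
  proof -
    consider (A) "i < m" | (B) "i = m" | (C) "m < i" "i + 1 < n" | (D) "i + 1 = n"
      using i by linarith
    then show ?thesis
    proof cases
      case A
      have md: "(i + 1) mod n = i + 1" using i A n by simp
      have "vs ! i = (a1 # xs) ! i" "vs ! (i+1) = xs ! i" using A vs_lo[of i] vs_lo[of "i+1"] by auto
      moreover have "inR E S ((a1 # xs) ! i) (xs ! i)"
        using rtrancl_path_nth[OF P1(1), of i] A unfolding m_def by simp
      ultimately show ?thesis unfolding md inR_def by auto
    next
      case B
      have md: "(i + 1) mod n = m + 1" using B n by simp
      have "vs ! i = a2" using vs_lo[of m] B last1 last_conv_nth[of "a1#xs"] unfolding m_def by simp
      moreover have "vs ! (m + 1) = b2" using vs_hi[of "m+1"] by simp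
      ultimately show ?thesis using md e2 by simp
    next
      case C
      have md: "(i + 1) mod n = i + 1" using C by simp
      define k where "k = i - (m + 1)"
      have k: "k < length ys" using C n unfolding k_def by simp
      have "vs ! i = (b2 # ys) ! k" "vs ! (i+1) = ys ! k"
        using C vs_hi[of i] vs_hi[of "i+1"] unfolding k_def by (auto simp: Suc_diff_le)
      moreover have "inR E (- S) ((b2 # ys) ! k) (ys ! k)"
        using rtrancl_path_nth[OF P2(1), of k] k by simp
      ultimately show ?thesis unfolding md inR_def by auto
    next
      case D
      have md: "(i + 1) mod n = 0" using D by simp
      have "vs ! 0 = a1" unfolding vs_def by simp
      moreover have "vs ! i = b1"
      proof -
        have "i = length vs - 1" using D unfolding n_def by simp
        moreover have "vs \<noteq> []" unfolding vs_def by simp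
        ultimately have "vs ! i = last vs" using last_conv_nth[of vs] by simp
        also have "\<dots> = b1" unfolding vs_def using last2 by simp
        finally show ?thesis .
      qed
      ultimately show ?thesis using md e1 by (simp add: insert_commute)
    qed
  qed
  define C where "C = {{vs ! i, vs ! ((i + 1) mod n)} | i. i < n}"
  have sc: "simple_cycle E C" unfolding simple_cycle_def
    using len dist key unfolding C_def n_def by blast
  have c1: "{a1,b1} \<in> C"
  proof -
    have "n - 1 < n" "(n - 1 + 1) mod n = 0" using len by auto
    moreover have "vs ! (n - 1) = b1"
    proof -
      have "vs \<noteq> []" unfolding vs_def by simp
      then have "vs ! (n - 1) = last vs" unfolding n_def using last_conv_nth[of vs] by simp
      also have "\<dots> = b1" unfolding vs_def using last2 by simp
      finally show ?thesis .
    qed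
    moreover have "vs ! 0 = a1" unfolding vs_def by simp
    ultimately show ?thesis unfolding C_def by (auto simp: insert_commute intro!: exI[of _ "n - 1"])
  qed
  have c2: "{a2,b2} \<in> C"
  proof -
    have "m < n" "(m + 1) mod n = m + 1" using n by auto
    moreover have "vs ! m = a2" using vs_lo[of m] last1 last_conv_nth[of "a1#xs"] unfolding m_def by simp
    moreover have "vs ! (m + 1) = b2" using vs_hi[of "m+1"] by simp
    ultimately show ?thesis unfolding C_def by (auto intro!: exI[of _ m])
  qed
  have "\<forall>e\<in>C. e \<subseteq> S \<or> e \<inter> S = {} \<or> e = {a1,b1} \<or> e = {a2,b2}"
    using key unfolding C_def by blast
  then show ?thesis using sc c1 c2 by blast
qed



lemma orient:
  assumes sg: "simple_graph V E" and e: "e \<in> delta E Z"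
  shows "\<exists>a b. e = {a,b} \<and> a \<in> Z \<and> b \<notin> Z"
proof -
  have eE: "e \<in> E" using e delta_sub by blast
  obtain u w where uw: "e = {u,w}" "u \<noteq> w" using sg_edge[OF sg eE] by metis
  have "(u \<in> Z) \<noteq> (w \<in> Z)" using e uw delta_pair[of u w E Z] by auto
  then show ?thesis using uw by (metis insert_commute)
qed

lemma edge_V: "simple_graph V E \<Longrightarrow> {a,b} \<in> E \<Longrightarrow> a \<in> V \<and> b \<in> V"
  unfolding simple_graph_def by (auto simp: doubleton_eq_iff)

lemma get_path:
  assumes sg: "simple_graph V E" and conn: "graph_connected V E"
    and min: "\<forall>W. delta E W \<subseteq> delta E S \<longrightarrow> delta E W = {} \<or> delta E W = delta E S"
    and ne: "delta E S \<noteq> {}" and a: "a \<in> S" "a \<in> V" and x: "x \<in> S" "x \<in> V"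
  obtains xs where "rtrancl_path (inR E S) a xs x" "distinct (a # xs)"
proof -
  have "(inR E S)\<^sup>*\<^sup>* a x" using minimal_conn[OF sg conn min ne a x] .
  then obtain ys where "rtrancl_path (inR E S) a ys x" using rtranclp_eq_rtrancl_path by metis
  then show ?thesis using rtrancl_path_distinct that by metis
qed

lemma no_minimal:
  fixes V :: "'v::finite set"
  assumes cac: "cactus V E" and Z: "card (delta E Z) \<ge> 3"
    and min: "\<forall>W. delta E W \<subseteq> delta E Z \<longrightarrow> delta E W = {} \<or> delta E W = delta E Z"
  shows False
proof -
  have sg: "simple_graph V E" and conn: "graph_connected V E"
    and cyc: "\<forall>e\<in>E. \<forall>C1 C2. simple_cycle E C1 \<and> simple_cycle E C2 \<and> e \<in> C1 \<and> e \<in> C2 \<longrightarrow> C1 = C2"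
    using cac unfolding cactus_def by auto
  obtain T where T: "T \<subseteq> delta E Z" "card T = 3" using obtain_subset_with_card_n[OF Z] by metis
  then obtain e1 e2 e3 where es: "T = {e1,e2,e3}" "e1 \<noteq> e2" "e2 \<noteq> e3" "e1 \<noteq> e3"
    using card_3_iff by metis
  have ed: "e1 \<in> delta E Z" "e2 \<in> delta E Z" "e3 \<in> delta E Z" using T es by auto
  have ne: "delta E Z \<noteq> {}" using ed by blast
  have min': "\<forall>W. delta E W \<subseteq> delta E (- Z) \<longrightarrow> delta E W = {} \<or> delta E W = delta E (- Z)"
    using min delta_compl[OF sg] by simp
  have ne': "delta E (- Z) \<noteq> {}" using ne delta_compl[OF sg] by simp
  obtain a1 b1 where 1: "e1 = {a1,b1}" "a1 \<in> Z" "b1 \<notin> Z" using orient[OF sg ed(1)] by blast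
  obtain a2 b2 where 2: "e2 = {a2,b2}" "a2 \<in> Z" "b2 \<notin> Z" using orient[OF sg ed(2)] by blast
  obtain a3 b3 where 3: "e3 = {a3,b3}" "a3 \<in> Z" "b3 \<notin> Z" using orient[OF sg ed(3)] by blast
  have E: "e1 \<in> E" "e2 \<in> E" "e3 \<in> E" using ed delta_sub by blast+
  have V: "a1 \<in> V" "b1 \<in> V" "a2 \<in> V" "b2 \<in> V" "a3 \<in> V" "b3 \<in> V"
    using edge_V[OF sg] E 1 2 3 by blast+
  obtain xs where xs: "rtrancl_path (inR E Z) a1 xs a2" "distinct (a1 # xs)"
    using get_path[OF sg conn min ne] 1 2 V by metis
  obtain ys where ys: "rtrancl_path (inR E (- Z)) b2 ys b1" "distinct (b2 # ys)"
    using get_path[OF sg conn min' ne', of b2 b1] 1 2 V by auto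
  obtain xs' where xs': "rtrancl_path (inR E Z) a1 xs' a3" "distinct (a1 # xs')"
    using get_path[OF sg conn min ne] 1 3 V by metis
  obtain ys' where ys': "rtrancl_path (inR E (- Z)) b3 ys' b1" "distinct (b3 # ys')"
    using get_path[OF sg conn min' ne', of b3 b1] 1 3 V by auto
  obtain C where C: "simple_cycle E C" "e1 \<in> C" "e2 \<in> C"
      "\<forall>e\<in>C. e \<subseteq> Z \<or> e \<inter> Z = {} \<or> e = e1 \<or> e = e2"
    using cycle_build[of a1 b1 E a2 b2 Z xs ys] E 1 2 es xs ys by auto
  obtain C' where C': "simple_cycle E C'" "e1 \<in> C'" "e3 \<in> C'"
    using cycle_build[of a1 b1 E a3 b3 Z xs' ys'] E 1 3 es xs' ys' by auto
  have "C = C'" using cyc E(1) C C' by blast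
  then have "e3 \<in> C" using C' by simp
  then have "e3 \<subseteq> Z \<or> e3 \<inter> Z = {} \<or> e3 = e1 \<or> e3 = e2" using C(4) by blast
  then show False using es ed(3) not_delta_sub[OF sg E(3)] not_delta_disj by blast
qed

theorem lemma1:
  fixes V :: "'v::finite set" and E :: "'v set set" and X Y :: "'v set"
  assumes "cactus V E"
    and "X \<subseteq> V" and "Y \<subseteq> V"
    and "cut_vec E X \<noteq> cut_vec E Y"
    and "skeleton_adjacent (CUT V E) (cut_vec E X) (cut_vec E Y)"
  shows "card (delta E ((X - Y) \<union> (Y - X))) \<le> 2"
proof (rule ccontr)
  assume "\<not> ?thesis"
  then have c: "card (delta E ((X - Y) \<union> (Y - X))) \<ge> 3" by simp
  have sg: "simple_graph V E" using assms(1) unfolding cactus_def by simp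
  obtain W where W: "delta E W \<subseteq> delta E ((X - Y) \<union> (Y - X))" "delta E W \<noteq> {}"
    "delta E W \<noteq> delta E ((X - Y) \<union> (Y - X))"
    using no_minimal[OF assms(1) c] by blast
  show False using not_adj[OF sg assms(2,3,5) W] .
qed


end
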